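(* Let $(X,\mathcal L,d)$ be a reduced Birkhoff--Beatley system whose vertical extension is drop complete, let $D\subseteq X$ be a nonempty convex set, and let $f,g\colon D\to\mathbb R$. Suppose that for all $n\in\mathbb N$ ($n\ge1$), all $x_0,x_1,\dots,x_n\in D$, all $x\in\operatorname{conv}\{x_1,\dots,x_n\}$ and all $t\in[0,1]$, $$f(c(t))\le(1-t)g(x_0)+t f(x),$$ where $c\colon[0,1]\to D$ is the standard parametrization of the segment $[x_0,x]$ (so $c(0)=x_0$, $c(1)=x$). Then there exists a segment convex function $\phi\colon D\to\mathbb R$ with $f\le\phi\le g$ on $D$.
   Context: A reduced Birkhoff--Beatley system is a triple $(X,\mathcal L,d)$ where $X$ is a set with at least two elements, $\mathcal L$ is a family of subsets of $X$ (lines), and $d\colon X^2\to\mathbb R$ is a function, such that: (i) any two distinct points lie in a unique line of $\mathcal L$; (ii) for each $\ell\in\mathcal L$ there is a bijection $c\colon\mathbb R\to\ell$ (a ruler) with $d(c(t),c(s))=|t-s|$. For $a,b,t\in X$, write $(atb)$ if $a,t,b$ are three distinct collinear points with $d(a,b)=d(a,t)+d(t,b)$. The segment $[a,b]$ is $\{a\}$ if $a=b$, and $\{t\mid (atb)\}\cup\{a,b\}$ otherwise. If $a\ne b$, $\ell$ is the line through them and $c$ a ruler for $\ell$ with $c(\alpha)=a$, $c(\beta)=b$, the standard parametrization of $[a,b]$ is $\tilde c\colon[0,1]\to[a,b]$, $\tilde c(t)=c((\beta-\alpha)t+\alpha)$; if $a=b$ it is the constant map $a$. A set $K$ is convex if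 $[a,b]\subseteq K$ for all $a,b\in K$; $\operatorname{conv}(H)$ is the intersection of all convex sets containing $H$. For a nonempty convex $D$, a function $\phi\colon D\to\mathbb R$ is segment convex if $\phi(c(t))\le(1-t)\phi(x_0)+t\phi(x_1)$ for all $x_0,x_1\in D$, $t\in[0,1]$, where $c$ is the standard parametrization of $[x_0,x_1]$. The system is drop complete if for every convex $K\subseteq X$ and every $x_0\in X$, $\operatorname{conv}(\{x_0\}\cup K)=\bigcup\{[x_0,x]\mid x\in K\}$. The vertical extension is $(X^*,\mathcal L^*,d^* )$ with $X^*=X\times\mathbb R$, $d^*((x_0,y_0),(x_1,y_1))=\sqrt{d(x_0,x_1)^2+(y_0-y_1)^2}$, and lines: for $(x_0,y_0)\ne(x_1,y_1)$ with $x_0\ne x_1$, taking a ruler $c$ of the line through $x_0,x_1$ with $c(s_0)=x_0,c(s_1)=x_1$ and $a=((s_0-s_1)^2+(y_0-y_1)^2)^{-1/2}$, the line $\{(c(at(s_1-s_0)+s_0),\,at(y_1-y_0)+y_0)\mid t\in\mathbb R\}$; for $x_0=x_1$, the line $\{x_0\}\times\mathbb R$. (It is itself a reduced Birkhoff--Beatley system, so segments, convexity and drop completeness make sense in it.) *)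

theory Defs
  imports Main "HOL-Library.FuncSet" Complex_Main
begin

definition ruler :: "('a \<Rightarrow> 'a \<Rightarrow> real) \<Rightarrow> 'a set \<Rightarrow> (real \<Rightarrow> 'a) \<Rightarrow> bool" where
  "ruler d l c \<longleftrightarrow> bij_betw c UNIV l \<and> (\<forall>t s. d (c t) (c s) = \<bar>t - s\<bar>)"

definition rBB :: "'a set \<Rightarrow> 'a set set \<Rightarrow> ('a \<Rightarrow> 'a \<Rightarrow> real) \<Rightarrow> bool" where
  "rBB X L d \<longleftrightarrow>
     (\<exists>a\<in>X. \<exists>b\<in>X. a \<noteq> b) \<and>
     (\<forall>l\<in>L. l \<subseteq> X) \<and>
     (\<forall>a\<in>X. \<forall>b\<in>X. a \<noteq> b \<longrightarrow> (\<exists>!l. l \<in> L \<and> a \<in> l \<and> b \<in> l)) \<and>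
     (\<forall>l\<in>L. \<exists>c. ruler d l c)"

definition betw :: "'a set set \<Rightarrow> ('a \<Rightarrow> 'a \<Rightarrow> real) \<Rightarrow> 'a \<Rightarrow> 'a \<Rightarrow> 'a \<Rightarrow> bool" where
  "betw L d a t b \<longleftrightarrow> a \<noteq> t \<and> t \<noteq> b \<and> a \<noteq> b \<and>
     (\<exists>l\<in>L. a \<in> l \<and> t \<in> l \<and> b \<in> l) \<and> d a b = d a t + d t b"

definition seg :: "'a set set \<Rightarrow> ('a \<Rightarrow> 'a \<Rightarrow> real) \<Rightarrow> 'a \<Rightarrow> 'a \<Rightarrow> 'a set" where
  "seg L d a b = (if a = b then {a} else {t. betw L d a t b} \<union> {a, b})"

definition bb_convex :: "'a set set \<Rightarrow> ('a \<Rightarrow> 'a \<Rightarrow> real) \<Rightarrow> 'a set \<Rightarrow> bool" where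
  "bb_convex L d K \<longleftrightarrow> (\<forall>a\<in>K. \<forall>b\<in>K. seg L d a b \<subseteq> K)"

definition bb_conv :: "'a set \<Rightarrow> 'a set set \<Rightarrow> ('a \<Rightarrow> 'a \<Rightarrow> real) \<Rightarrow> 'a set \<Rightarrow> 'a set" where
  "bb_conv X L d H = \<Inter>{K. K \<subseteq> X \<and> bb_convex L d K \<and> H \<subseteq> K}"

text \<open>Standard parametrization of the segment from a to b (a choice of ruler is made;
  the result does not depend on it).\<close>
definition std_param :: "'a set set \<Rightarrow> ('a \<Rightarrow> 'a \<Rightarrow> real) \<Rightarrow> 'a \<Rightarrow> 'a \<Rightarrow> real \<Rightarrow> 'a" where
  "std_param L d a b t =
     (if a = b then a else
      (let l = (THE l. l \<in> L \<and> a \<in> l \<and> b \<in> l);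
           c = (SOME c. ruler d l c);
           \<alpha> = (SOME \<alpha>. c \<alpha> = a);
           \<beta> = (SOME \<beta>. c \<beta> = b)
       in c ((\<beta> - \<alpha>) * t + \<alpha>)))"

definition seg_convex_fun ::
  "'a set set \<Rightarrow> ('a \<Rightarrow> 'a \<Rightarrow> real) \<Rightarrow> 'a set \<Rightarrow> ('a \<Rightarrow> real) \<Rightarrow> bool" where
  "seg_convex_fun L d D \<phi> \<longleftrightarrow>
     (\<forall>x0\<in>D. \<forall>x1\<in>D. \<forall>t\<in>{0..1::real}.
        \<phi> (std_param L d x0 x1 t) \<le> (1 - t) * \<phi> x0 + t * \<phi> x1)"

text \<open>Drop completeness (for nonempty convex K; for K empty the identity fails trivially).\<close>
definition drop_complete :: "'a set \<Rightarrow> 'a set set \<Rightarrow> ('a \<Rightarrow> 'a \<Rightarrow> real) \<Rightarrow> bool" where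
  "drop_complete X L d \<longleftrightarrow>
     (\<forall>K x0. K \<subseteq> X \<and> K \<noteq> {} \<and> bb_convex L d K \<and> x0 \<in> X \<longrightarrow>
        bb_conv X L d (insert x0 K) = (\<Union>x\<in>K. seg L d x0 x))"

definition vert_dist :: "('a \<Rightarrow> 'a \<Rightarrow> real) \<Rightarrow> ('a \<times> real) \<Rightarrow> ('a \<times> real) \<Rightarrow> real" where
  "vert_dist d p q = sqrt ((d (fst p) (fst q))\<^sup>2 + (snd p - snd q)\<^sup>2)"

definition vert_lines :: "'a set \<Rightarrow> 'a set set \<Rightarrow> ('a \<Rightarrow> 'a \<Rightarrow> real) \<Rightarrow> ('a \<times> real) set set" where
  "vert_lines X L d = {S. \<exists>x0 y0 x1 y1. x0 \<in> X \<and> x1 \<in> X \<and> (x0, y0) \<noteq> (x1, y1) \<and>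
     ((x0 \<noteq> x1 \<and> (\<exists>l c s0 s1. l \<in> L \<and> x0 \<in> l \<and> x1 \<in> l \<and> ruler d l c \<and>
          c s0 = x0 \<and> c s1 = x1 \<and>
          (let a = 1 / sqrt ((s0 - s1)\<^sup>2 + (y0 - y1)\<^sup>2) in
           S = (\<lambda>t. (c (a * t * (s1 - s0) + s0), a * t * (y1 - y0) + y0)) ` UNIV)))
      \<or> (x0 = x1 \<and> S = {x0} \<times> UNIV))}"

end

theory Submission
  imports Defs
begin

lemma ruler_in: "ruler d l c \<Longrightarrow> c u \<in> l"
  unfolding ruler_def bij_betw_def by auto

lemma ruler_inj: "ruler d l c \<Longrightarrow> c u = c v \<Longrightarrow> u = v"
  unfolding ruler_def bij_betw_def inj_on_def by auto

lemma ruler_surj: "ruler d l c \<Longrightarrow> z \<in> l \<Longrightarrow> \<exists>u. c u = z"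
  unfolding ruler_def bij_betw_def by auto

lemma ruler_dist: "ruler d l c \<Longrightarrow> d (c u) (c v) = \<bar>u - v\<bar>"
  unfolding ruler_def by auto

lemma rBB_sub: "rBB X L d \<Longrightarrow> l \<in> L \<Longrightarrow> l \<subseteq> X"
  unfolding rBB_def by auto

lemma rBB_ruler: "rBB X L d \<Longrightarrow> l \<in> L \<Longrightarrow> \<exists>c. ruler d l c"
  unfolding rBB_def by auto

lemma rBB_line: "rBB X L d \<Longrightarrow> a \<in> X \<Longrightarrow> b \<in> X \<Longrightarrow> a \<noteq> b \<Longrightarrow> \<exists>!l. l \<in> L \<and> a \<in> l \<and> b \<in> l"
  unfolding rBB_def by auto

lemma line_unique: "rBB X L d \<Longrightarrow> a \<in> X \<Longrightarrow> b \<in> X \<Longrightarrow> a \<noteq> b \<Longrightarrow>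
   l \<in> L \<Longrightarrow> a \<in> l \<Longrightarrow> b \<in> l \<Longrightarrow> l' \<in> L \<Longrightarrow> a \<in> l' \<Longrightarrow> b \<in> l' \<Longrightarrow> l = l'"
proof -
  assume a: "rBB X L d" "a \<in> X" "b \<in> X" "a \<noteq> b" "l \<in> L" "a \<in> l" "b \<in> l" "l' \<in> L" "a \<in> l'" "b \<in> l'"
  have "\<exists>!l. l \<in> L \<and> a \<in> l \<and> b \<in> l" using rBB_line[OF a(1-4)] .
  then show "l = l'" using a(5-10) by auto
qed

lemma d_refl: assumes "rBB X L d" "x \<in> X" shows "d x x = 0"
proof -
  obtain a b where ab: "a \<in> X" "b \<in> X" "a \<noteq> b" using assms(1) unfolding rBB_def by auto
  obtain y where y: "y \<in> X" "y \<noteq> x" using ab by blast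
  obtain l where l: "l \<in> L" "x \<in> l" "y \<in> l" using rBB_line[OF assms(1) assms(2) y(1)] y(2) by blast
  obtain c where c: "ruler d l c" using rBB_ruler[OF assms(1) l(1)] by auto
  obtain u where "c u = x" using ruler_surj[OF c l(2)] by auto
  then show ?thesis using ruler_dist[OF c, of u u] by simp
qed

lemma sp_facts:
  assumes "rBB X L d" "x0 \<in> X" "x1 \<in> X" "x0 \<noteq> x1"
  shows "\<exists>l c \<alpha> \<beta>. l \<in> L \<and> x0 \<in> l \<and> x1 \<in> l \<and> ruler d l c \<and> c \<alpha> = x0 \<and> c \<beta> = x1 \<and>
     (\<forall>t. std_param L d x0 x1 t = c ((\<beta> - \<alpha>) * t + \<alpha>))"
proof -
  obtain l where l: "l \<in> L" "x0 \<in> l" "x1 \<in> l" and u: "\<And>l'. l' \<in> L \<and> x0 \<in> l' \<and> x1 \<in> l' \<Longrightarrow> l' = l"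
  proof -
    have "\<exists>!l. l \<in> L \<and> x0 \<in> l \<and> x1 \<in> l" using rBB_line[OF assms] .
    then show ?thesis using that by blast
  qed
  have th: "(THE l. l \<in> L \<and> x0 \<in> l \<and> x1 \<in> l) = l"
  proof (rule the_equality)
    show "l \<in> L \<and> x0 \<in> l \<and> x1 \<in> l" using l by blast
    show "\<And>l'. l' \<in> L \<and> x0 \<in> l' \<and> x1 \<in> l' \<Longrightarrow> l' = l" by (rule u)
  qed
  define c where "c = (SOME c. ruler d l c)"
  have c: "ruler d l c" unfolding c_def using rBB_ruler[OF assms(1) l(1)] by (rule someI_ex)
  define \<alpha> where "\<alpha> = (SOME \<alpha>. c \<alpha> = x0)"
  define \<beta> where "\<beta> = (SOME \<beta>. c \<beta> = x1)"
  have a: "c \<alpha> = x0" unfolding \<alpha>_def using ruler_surj[OF c l(2)] by (rule someI_ex)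
  have b: "c \<beta> = x1" unfolding \<beta>_def using ruler_surj[OF c l(3)] by (rule someI_ex)
  have "\<forall>t. std_param L d x0 x1 t = c ((\<beta> - \<alpha>) * t + \<alpha>)"
    using assms(4) unfolding std_param_def Let_def by (simp add: th c_def \<alpha>_def \<beta>_def)
  then show ?thesis using l c a b by blast
qed

lemma sp_same: "std_param L d x x t = x" unfolding std_param_def by simp

lemma sp_0: assumes "rBB X L d" "x0 \<in> X" "x1 \<in> X" shows "std_param L d x0 x1 0 = x0"
proof (cases "x0 = x1")
  case True then show ?thesis by (simp add: sp_same)
next
  case False then show ?thesis using sp_facts[OF assms False] by auto
qed

lemma sp_1: assumes "rBB X L d" "x0 \<in> X" "x1 \<in> X" shows "std_param L d x0 x1 1 = x1"
proof (cases "x0 = x1")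
  case True then show ?thesis by (simp add: sp_same)
next
  case False then show ?thesis using sp_facts[OF assms False] by auto
qed

lemma sp_seg: assumes "rBB X L d" "x0 \<in> X" "x1 \<in> X" "t \<in> {0..1}"
  shows "std_param L d x0 x1 t \<in> seg L d x0 x1"
proof (cases "x0 = x1")
  case True then show ?thesis by (simp add: sp_same seg_def)
next
  case False
  then obtain l c \<alpha> \<beta> where l: "l \<in> L" "x0 \<in> l" "x1 \<in> l" and c: "ruler d l c" and ab: "c \<alpha> = x0" "c \<beta> = x1"
     and sp: "\<And>t. std_param L d x0 x1 t = c ((\<beta> - \<alpha>) * t + \<alpha>)" using sp_facts[OF assms(1-3) False] by blast
  have ne: "\<alpha> \<noteq> \<beta>" using ab False by auto
  show ?thesis
  proof (cases "t = 0 \<or> t = 1")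
    case True then show ?thesis using sp ab by (auto simp: seg_def)
  next
    case nt: False
    let ?z = "c ((\<beta> - \<alpha>) * t + \<alpha>)"
    have t: "0 < t" "t < 1" using assms(4) nt by auto
    have z0: "?z \<noteq> x0"
    proof
      assume "?z = x0" then have "?z = c \<alpha>" using ab by simp
      then have "(\<beta> - \<alpha>) * t + \<alpha> = \<alpha>" by (rule ruler_inj[OF c])
      then show False using ne t by simp
    qed
    have z1: "?z \<noteq> x1"
    proof
      assume "?z = x1" then have "?z = c \<beta>" using ab by simp
      then have "(\<beta> - \<alpha>) * t + \<alpha> = \<beta>" by (rule ruler_inj[OF c])
      then have "(\<beta> - \<alpha>) * (1 - t) = 0" by (simp add: algebra_simps)
      then show False using ne t by simp
    qed
    have dd: "d x0 x1 = d x0 ?z + d ?z x1"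
    proof -
      have e1: "\<bar>\<alpha> - ((\<beta> - \<alpha>) * t + \<alpha>)\<bar> = t * \<bar>\<beta> - \<alpha>\<bar>"
        using t by (simp add: abs_mult abs_minus_commute)
      have e2: "\<bar>(\<beta> - \<alpha>) * t + \<alpha> - \<beta>\<bar> = (1 - t) * \<bar>\<beta> - \<alpha>\<bar>"
      proof -
        have "(\<beta> - \<alpha>) * t + \<alpha> - \<beta> = (\<beta> - \<alpha>) * (t - 1)" by (simp add: algebra_simps)
        then show ?thesis using t by (simp add: abs_mult)
      qed
      have h1: "d x0 x1 = \<bar>\<beta> - \<alpha>\<bar>" using ruler_dist[OF c, of \<alpha> \<beta>] ab by (simp add: abs_minus_commute)
      have h2: "d x0 ?z = t * \<bar>\<beta> - \<alpha>\<bar>" using ruler_dist[OF c, of \<alpha> "(\<beta> - \<alpha>) * t + \<alpha>"] ab(1) e1 by simp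
      have h3: "d ?z x1 = (1 - t) * \<bar>\<beta> - \<alpha>\<bar>" using ruler_dist[OF c, of "(\<beta> - \<alpha>) * t + \<alpha>" \<beta>] ab(2) e2 by simp
      show ?thesis unfolding h1 h2 h3 by (simp add: algebra_simps)
    qed
    have "betw L d x0 ?z x1" unfolding betw_def using z0 z1 False l ruler_in[OF c] dd by blast
    then show ?thesis using sp False by (simp add: seg_def)
  qed
qed

lemma same_point:
  assumes c: "ruler d l c" and "x0 \<in> l" "x \<in> l" "z1 \<in> l" "z2 \<in> l" "x0 \<noteq> x"
    "d x0 z1 = d x0 z2" "d x z1 = d x z2"
  shows "z1 = z2"
proof -
  obtain u0 where u0: "c u0 = x0" using ruler_surj[OF c assms(2)] by blast
  obtain ux where ux: "c ux = x" using ruler_surj[OF c assms(3)] by blast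
  obtain u1 where u1: "c u1 = z1" using ruler_surj[OF c assms(4)] by blast
  obtain u2 where u2: "c u2 = z2" using ruler_surj[OF c assms(5)] by blast
  note u = u0 ux u1 u2
  have "u0 \<noteq> ux" using u assms(6) by auto
  moreover have "\<bar>u0 - u1\<bar> = \<bar>u0 - u2\<bar>" "\<bar>ux - u1\<bar> = \<bar>ux - u2\<bar>"
    using assms(7,8) ruler_dist[OF c, of u0 u1] ruler_dist[OF c, of u0 u2] ruler_dist[OF c, of ux u1] ruler_dist[OF c, of ux u2] unfolding u by simp_all
  ultimately have "u1 = u2" by arith
  then show ?thesis using u by simp
qed


lemma conv_sub: "H \<subseteq> bb_conv X L d H" unfolding bb_conv_def by auto

lemma conv_least: "K \<subseteq> X \<Longrightarrow> bb_convex L d K \<Longrightarrow> H \<subseteq> K \<Longrightarrow> bb_conv X L d H \<subseteq> K"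
  unfolding bb_conv_def by auto

lemma conv_mono: "H \<subseteq> H' \<Longrightarrow> bb_conv X L d H \<subseteq> bb_conv X L d H'"
  unfolding bb_conv_def by blast

lemma conv_convex: "bb_convex L d (bb_conv X L d H)"
  unfolding bb_convex_def
proof (intro ballI subsetI)
  fix a b z assume a: "a \<in> bb_conv X L d H" and b: "b \<in> bb_conv X L d H" and z: "z \<in> seg L d a b"
  show "z \<in> bb_conv X L d H" unfolding bb_conv_def
  proof (rule InterI)
    fix K assume K: "K \<in> {K. K \<subseteq> X \<and> bb_convex L d K \<and> H \<subseteq> K}"
    then have "a \<in> K" "b \<in> K" using a b unfolding bb_conv_def by blast+
    moreover have "bb_convex L d K" using K by auto
    ultimately show "z \<in> K" using z unfolding bb_convex_def by blast
  qed
qed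

lemma conv_empty: "bb_conv X L d {} = {}"
proof -
  have "bb_conv X L d {} \<subseteq> {}" by (rule conv_least) (auto simp: bb_convex_def)
  then show ?thesis by auto
qed

lemma conv_single: "p \<in> X \<Longrightarrow> bb_conv X L d {p} \<subseteq> {p}"
  by (rule conv_least) (auto simp: bb_convex_def seg_def)

lemma vd_ruler: "ruler d l c \<Longrightarrow> vert_dist d (c u1, v1) (c u2, v2) = sqrt ((u1 - u2)\<^sup>2 + (v1 - v2)\<^sup>2)"
  unfolding vert_dist_def by (simp add: ruler_dist)

lemma vd_vert: "rBB X L d \<Longrightarrow> x \<in> X \<Longrightarrow> vert_dist d (x, v1) (x, v2) = \<bar>v1 - v2\<bar>"
  unfolding vert_dist_def by (simp add: d_refl)

lemma vd_param: assumes "ruler d l c" "A\<^sup>2 + B\<^sup>2 = 1"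
  shows "vert_dist d (c (A * \<tau> + s0), B * \<tau> + b0) (c (A * \<sigma> + s0), B * \<sigma> + b0) = \<bar>\<tau> - \<sigma>\<bar>"
proof -
  have "(A * \<tau> + s0 - (A * \<sigma> + s0))\<^sup>2 + (B * \<tau> + b0 - (B * \<sigma> + b0))\<^sup>2 = (A\<^sup>2 + B\<^sup>2) * (\<tau> - \<sigma>)\<^sup>2"
    by (simp add: power2_eq_square algebra_simps)
  then show ?thesis unfolding vd_ruler[OF assms(1)] using assms(2) by simp
qed

lemma norm_AB: assumes "(s0::real, b0::real) \<noteq> (s1, b1)"
  shows "1 / sqrt ((s0 - s1)\<^sup>2 + (b0 - b1)\<^sup>2) > 0"
    and "(1 / sqrt ((s0 - s1)\<^sup>2 + (b0 - b1)\<^sup>2) * (s1 - s0))\<^sup>2 + (1 / sqrt ((s0 - s1)\<^sup>2 + (b0 - b1)\<^sup>2) * (b1 - b0))\<^sup>2 = 1"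
proof -
  let ?R = "(s0 - s1)\<^sup>2 + (b0 - b1)\<^sup>2"
  have R: "?R > 0" using assms by (auto simp: add_pos_nonneg add_nonneg_pos)
  then show "1 / sqrt ?R > 0" by simp
  have "(1 / sqrt ?R * (s1 - s0))\<^sup>2 + (1 / sqrt ?R * (b1 - b0))\<^sup>2 = ((s1 - s0)\<^sup>2 + (b1 - b0)\<^sup>2) / ?R"
    using R by (simp add: power_mult_distrib power_divide add_divide_distrib)
  also have "\<dots> = 1" using R assms by (simp add: power2_commute)
  finally show "(1 / sqrt ?R * (s1 - s0))\<^sup>2 + (1 / sqrt ?R * (b1 - b0))\<^sup>2 = 1" .
qed

lemma vline_param:
  assumes "rBB X L d" "S \<in> vert_lines X L d"
  shows "(\<exists>a0. a0 \<in> X \<and> S = {a0} \<times> UNIV) \<or>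
    (\<exists>l c A B s0 b0. l \<in> L \<and> ruler d l c \<and> A\<^sup>2 + B\<^sup>2 = 1 \<and> S = range (\<lambda>\<tau>. (c (A * \<tau> + s0), B * \<tau> + b0)))"
proof -
  from assms(2) obtain a0 b0 a1 b1 where H: "a0 \<in> X \<and> a1 \<in> X \<and> (a0, b0) \<noteq> (a1, b1) \<and>
     ((a0 \<noteq> a1 \<and> (\<exists>l c s0 s1. l \<in> L \<and> a0 \<in> l \<and> a1 \<in> l \<and> ruler d l c \<and>
          c s0 = a0 \<and> c s1 = a1 \<and>
          (let a = 1 / sqrt ((s0 - s1)\<^sup>2 + (b0 - b1)\<^sup>2) in
           S = (\<lambda>t. (c (a * t * (s1 - s0) + s0), a * t * (b1 - b0) + b0)) ` UNIV)))
      \<or> (a0 = a1 \<and> S = {a0} \<times> UNIV))"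
    unfolding vert_lines_def mem_Collect_eq by (elim exE) (rule that)
  note a0X = conjunct1[OF H]
  note D = conjunct2[OF conjunct2[OF conjunct2[OF H]]]
  show ?thesis
  proof (rule disjE[OF D])
    assume "a0 = a1 \<and> S = {a0} \<times> UNIV"
    then show ?thesis using a0X by blast
  next
    assume E: "a0 \<noteq> a1 \<and> (\<exists>l c s0 s1. l \<in> L \<and> a0 \<in> l \<and> a1 \<in> l \<and> ruler d l c \<and>
          c s0 = a0 \<and> c s1 = a1 \<and>
          (let a = 1 / sqrt ((s0 - s1)\<^sup>2 + (b0 - b1)\<^sup>2) in
           S = (\<lambda>t. (c (a * t * (s1 - s0) + s0), a * t * (b1 - b0) + b0)) ` UNIV))"
    note False = conjunct1[OF E]
    from conjunct2[OF E] obtain l c s0 s1 where Q: "l \<in> L \<and> a0 \<in> l \<and> a1 \<in> l \<and> ruler d l c \<and>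
          c s0 = a0 \<and> c s1 = a1 \<and>
          (let a = 1 / sqrt ((s0 - s1)\<^sup>2 + (b0 - b1)\<^sup>2) in
           S = (\<lambda>t. (c (a * t * (s1 - s0) + s0), a * t * (b1 - b0) + b0)) ` UNIV)"
      by (elim exE) (rule that)
    define a where "a = 1 / sqrt ((s0 - s1)\<^sup>2 + (b0 - b1)\<^sup>2)"
    have l: "l \<in> L" "ruler d l c" "c s0 = a0" "c s1 = a1" using Q by blast+
    have S: "S = (\<lambda>t. (c (a * t * (s1 - s0) + s0), a * t * (b1 - b0) + b0)) ` UNIV"
      using Q unfolding Let_def a_def by blast
    have ne: "(s0, b0) \<noteq> (s1, b1)" using False l by auto
    have AB: "(a * (s1 - s0))\<^sup>2 + (a * (b1 - b0))\<^sup>2 = 1" unfolding a_def by (rule norm_AB(2)[OF ne])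
    have fe: "(\<lambda>t. (c (a * t * (s1 - s0) + s0), a * t * (b1 - b0) + b0)) = (\<lambda>\<tau>. (c (a * (s1 - s0) * \<tau> + s0), a * (b1 - b0) * \<tau> + b0))"
      by (rule ext) (simp add: algebra_simps)
    have Seq: "S = range (\<lambda>\<tau>. (c (a * (s1 - s0) * \<tau> + s0), a * (b1 - b0) * \<tau> + b0))"
      unfolding S fe ..
    show ?thesis
      apply (rule disjI2)
      apply (rule exI[of _ l], rule exI[of _ c], rule exI[of _ "a * (s1 - s0)"], rule exI[of _ "a * (b1 - b0)"], rule exI[of _ s0], rule exI[of _ b0])
      using l(1,2) AB Seq by blast
  qed
qed

lemma vlines_sub: assumes "rBB X L d" "S \<in> vert_lines X L d" shows "S \<subseteq> X \<times> UNIV"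
  using vline_param[OF assms]
proof
  assume "\<exists>a0. a0 \<in> X \<and> S = {a0} \<times> UNIV" then show ?thesis by blast
next
  assume "\<exists>l c A B s0 b0. l \<in> L \<and> ruler d l c \<and> A\<^sup>2 + B\<^sup>2 = 1 \<and> S = range (\<lambda>\<tau>. (c (A * \<tau> + s0), B * \<tau> + b0))"
  then obtain l c A B s0 b0 where l: "l \<in> L" "ruler d l c" and S: "S = range (\<lambda>\<tau>. (c (A * \<tau> + s0), B * \<tau> + b0))" by blast
  have "l \<subseteq> X" by (rule rBB_sub[OF assms(1) l(1)])
  then show ?thesis unfolding S using ruler_in[OF l(2)] by blast
qed

lemma Xs_convex: assumes "rBB X L d" shows "bb_convex (vert_lines X L d) (vert_dist d) (X \<times> UNIV)"
  unfolding bb_convex_def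
proof (intro ballI subsetI)
  fix a b z assume a: "a \<in> X \<times> UNIV" and b: "b \<in> X \<times> UNIV" and z: "z \<in> seg (vert_lines X L d) (vert_dist d) a b"
  show "z \<in> X \<times> UNIV"
  proof (cases "z = a \<or> z = b")
    case True then show ?thesis using a b by blast
  next
    case False
    then have "betw (vert_lines X L d) (vert_dist d) a z b" using z unfolding seg_def by (auto split: if_splits)
    then obtain S where "S \<in> vert_lines X L d" "z \<in> S" unfolding betw_def by blast
    then show ?thesis using vlines_sub[OF assms] by blast
  qed
qed

lemma betw_interval: assumes "(a::real) \<noteq> b" "\<bar>a - b\<bar> = \<bar>a - q\<bar> + \<bar>q - b\<bar>"
  shows "\<exists>t\<in>{0..1}. q = a + t * (b - a)"
proof -
  define t where "t = (q - a) / (b - a)"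
  have ba: "b - a \<noteq> 0" using assms by simp
  have q: "q = a + t * (b - a)" unfolding t_def using ba by simp
  have "0 \<le> t \<and> t \<le> 1"
  proof (cases "a < b")
    case True
    then have "a \<le> q" "q \<le> b" using assms(2) by arith+
    then show ?thesis unfolding t_def using True by (simp add: divide_le_eq_1)
  next
    case False
    then have "b < a" using assms(1) by simp
    then have "b \<le> q" "q \<le> a" using assms(2) by arith+
    then show ?thesis unfolding t_def using \<open>b < a\<close> by (simp add: divide_le_eq_1 zero_le_divide_iff)
  qed
  then show ?thesis using q by auto
qed


lemma sqrt_scale: assumes "(s::real) \<ge> 0" shows "sqrt ((s * u)\<^sup>2 + (s * v)\<^sup>2) = s * sqrt (u\<^sup>2 + v\<^sup>2)"
proof -
  have "(s * u)\<^sup>2 + (s * v)\<^sup>2 = s\<^sup>2 * (u\<^sup>2 + v\<^sup>2)" by (simp add: power_mult_distrib algebra_simps)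
  then show ?thesis using assms by (simp add: real_sqrt_mult)
qed

lemma abs_scale: assumes "(s::real) \<ge> 0" shows "\<bar>s * u\<bar> = s * \<bar>u\<bar>"
  using assms by (simp add: abs_mult)

lemma backward:
  assumes r: "rBB X L d" and x0: "x0 \<in> X" and x: "x \<in> X"
    and q: "q \<in> seg (vert_lines X L d) (vert_dist d) (x0, y0) (x, y)"
  shows "\<exists>t\<in>{0..1}. q = (std_param L d x0 x t, (1 - t) * y0 + t * y)"
proof -
  have t0: "(x0, y0) = (std_param L d x0 x 0, (1 - 0) * y0 + 0 * y)" using sp_0[OF r x0 x] by simp
  have t1: "(x, y) = (std_param L d x0 x 1, (1 - 1) * y0 + 1 * y)" using sp_1[OF r x0 x] by simp
  show ?thesis
  proof (cases "q = (x0, y0) \<or> q = (x, y)")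
    case True
    then show ?thesis
    proof
      assume "q = (x0, y0)" then show ?thesis using t0 by (intro bexI[of _ 0]) auto
    next
      assume "q = (x, y)" then show ?thesis using t1 by (intro bexI[of _ 1]) auto
    qed
  next
    case False
    then have B: "betw (vert_lines X L d) (vert_dist d) (x0, y0) q (x, y)"
      using q unfolding seg_def by (auto split: if_splits)
    then have ne: "(x0, y0) \<noteq> (x, y)" and
      deq: "vert_dist d (x0, y0) (x, y) = vert_dist d (x0, y0) q + vert_dist d q (x, y)"
      unfolding betw_def by blast+
    obtain S where S: "S \<in> vert_lines X L d" "(x0, y0) \<in> S" "q \<in> S" "(x, y) \<in> S"
      using B unfolding betw_def by blast
    from vline_param[OF r S(1)] show ?thesis
    proof
      assume "\<exists>a0. a0 \<in> X \<and> S = {a0} \<times> UNIV"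
      then obtain a0 where Sa: "S = {a0} \<times> UNIV" by blast
      then have e: "x0 = a0" "x = a0" "fst q = a0" using S by auto
      obtain yq where qq: "q = (x0, yq)" using e by (cases q) auto
      have xx: "x = x0" using e by simp
      have yne: "y0 \<noteq> y" using ne xx by simp
      have "\<bar>y0 - y\<bar> = \<bar>y0 - yq\<bar> + \<bar>yq - y\<bar>" using deq unfolding qq xx vd_vert[OF r x0] .
      then obtain t where t: "t \<in> {0..1}" "yq = y0 + t * (y - y0)" using betw_interval[OF yne] by blast
      have "q = (std_param L d x0 x t, (1 - t) * y0 + t * y)" unfolding qq xx sp_same using t(2)
        by (simp add: algebra_simps)
      then show ?thesis using t(1) by blast
    next
      assume "\<exists>l c A B s0 b0. l \<in> L \<and> ruler d l c \<and> A\<^sup>2 + B\<^sup>2 = 1 \<and> S = range (\<lambda>\<tau>. (c (A * \<tau> + s0), B * \<tau> + b0))"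
      then obtain l c A B s0 b0 where l: "l \<in> L" "ruler d l c" "A\<^sup>2 + B\<^sup>2 = 1"
        and Seq: "S = range (\<lambda>\<tau>. (c (A * \<tau> + s0), B * \<tau> + b0))" by blast
      obtain \<tau>0 where p0: "(x0, y0) = (c (A * \<tau>0 + s0), B * \<tau>0 + b0)" using S(2) unfolding Seq by blast
      obtain \<tau>p where pp: "(x, y) = (c (A * \<tau>p + s0), B * \<tau>p + b0)" using S(4) unfolding Seq by blast
      obtain \<tau>q where qq: "q = (c (A * \<tau>q + s0), B * \<tau>q + b0)" using S(3) unfolding Seq by blast
      have x0e: "x0 = c (A * \<tau>0 + s0)" "y0 = B * \<tau>0 + b0" using p0 by simp_all
      have xe: "x = c (A * \<tau>p + s0)" "y = B * \<tau>p + b0" using pp by simp_all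
      have tne: "\<tau>0 \<noteq> \<tau>p" using ne p0 pp by auto
      have "\<bar>\<tau>0 - \<tau>p\<bar> = \<bar>\<tau>0 - \<tau>q\<bar> + \<bar>\<tau>q - \<tau>p\<bar>"
        using deq unfolding p0 pp qq vd_param[OF l(2) l(3)] .
      then obtain t where t: "t \<in> {0..1}" "\<tau>q = \<tau>0 + t * (\<tau>p - \<tau>0)" using betw_interval[OF tne] by blast
      have tt: "0 \<le> t" "t \<le> 1" using t(1) by auto
      define u0 where "u0 = A * \<tau>0 + s0"
      define up where "up = A * \<tau>p + s0"
      have uq: "A * \<tau>q + s0 = u0 + t * (up - u0)" unfolding u0_def up_def t(2) by (simp add: algebra_simps)
      have ysnd: "B * \<tau>q + b0 = (1 - t) * y0 + t * y" unfolding x0e(2) xe(2) t(2) by (simp add: algebra_simps)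
      have fstq: "c (A * \<tau>q + s0) = std_param L d x0 x t"
      proof (cases "x0 = x")
        case True
        then have "u0 = up" using x0e xe ruler_inj[OF l(2)] unfolding u0_def up_def by metis
        then have "c (u0 + t * (up - u0)) = x0" using x0e(1) unfolding u0_def by simp
        then show ?thesis unfolding uq using True by (simp add: sp_same)
      next
        case False
        obtain l2 c2 \<alpha> \<beta> where l2: "l2 \<in> L" "x0 \<in> l2" "x \<in> l2" and c2: "ruler d l2 c2"
          and ab: "c2 \<alpha> = x0" "c2 \<beta> = x" and sp: "\<And>t. std_param L d x0 x t = c2 ((\<beta> - \<alpha>) * t + \<alpha>)"
          using sp_facts[OF r x0 x False] by blast
        have inl: "x0 \<in> l" "x \<in> l" using x0e(1) xe(1) ruler_in[OF l(2)] by auto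
        have ll: "l2 = l" using line_unique[OF r x0 x False l2(1) l2(2) l2(3) l(1) inl] .
        have c2l: "ruler d l c2" using c2 ll by simp
        have z1l: "c (u0 + t * (up - u0)) \<in> l" by (rule ruler_in[OF l(2)])
        have z2l: "c2 ((\<beta> - \<alpha>) * t + \<alpha>) \<in> l" by (rule ruler_in[OF c2l])
        have dx: "d x0 x = \<bar>u0 - up\<bar>" "d x0 x = \<bar>\<alpha> - \<beta>\<bar>"
          using ruler_dist[OF l(2), of u0 up] ruler_dist[OF c2, of \<alpha> \<beta>] x0e xe ab unfolding u0_def up_def by simp_all
        have e1: "u0 - (u0 + t * (up - u0)) = t * (u0 - up)" by (simp add: algebra_simps)
        have e2: "\<alpha> - ((\<beta> - \<alpha>) * t + \<alpha>) = t * (\<alpha> - \<beta>)" by (simp add: algebra_simps)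
        have e3: "up - (u0 + t * (up - u0)) = (1 - t) * (up - u0)" by (simp add: algebra_simps)
        have e4: "\<beta> - ((\<beta> - \<alpha>) * t + \<alpha>) = (1 - t) * (\<beta> - \<alpha>)" by (simp add: algebra_simps)
        have d1: "d x0 (c (u0 + t * (up - u0))) = d x0 (c2 ((\<beta> - \<alpha>) * t + \<alpha>))"
        proof -
          have "d x0 (c (u0 + t * (up - u0))) = t * \<bar>u0 - up\<bar>"
            using ruler_dist[OF l(2), of u0 "u0 + t * (up - u0)"] x0e unfolding u0_def[symmetric] e1 abs_scale[OF tt(1)] by simp
          moreover have "d x0 (c2 ((\<beta> - \<alpha>) * t + \<alpha>)) = t * \<bar>\<alpha> - \<beta>\<bar>"
            using ruler_dist[OF c2, of \<alpha> "(\<beta> - \<alpha>) * t + \<alpha>"] ab unfolding e2 abs_scale[OF tt(1)] by simp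
          ultimately show ?thesis using dx by simp
        qed
        have t1': "1 - t \<ge> 0" using tt by simp
        have d2: "d x (c (u0 + t * (up - u0))) = d x (c2 ((\<beta> - \<alpha>) * t + \<alpha>))"
        proof -
          have "d x (c (u0 + t * (up - u0))) = (1 - t) * \<bar>up - u0\<bar>"
            using ruler_dist[OF l(2), of up "u0 + t * (up - u0)"] xe unfolding up_def[symmetric] e3 abs_scale[OF t1'] by simp
          moreover have "d x (c2 ((\<beta> - \<alpha>) * t + \<alpha>)) = (1 - t) * \<bar>\<beta> - \<alpha>\<bar>"
            using ruler_dist[OF c2, of \<beta> "(\<beta> - \<alpha>) * t + \<alpha>"] ab unfolding e4 abs_scale[OF t1'] by simp
          ultimately show ?thesis using dx by (simp add: abs_minus_commute)
        qed
        have "c (u0 + t * (up - u0)) = c2 ((\<beta> - \<alpha>) * t + \<alpha>)"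
          by (rule same_point[OF l(2) inl z1l z2l False d1 d2])
        then show ?thesis unfolding uq sp by simp
      qed
      have "q = (std_param L d x0 x t, (1 - t) * y0 + t * y)" unfolding qq fstq ysnd ..
      then show ?thesis using t(1) by blast
    qed
  qed
qed


lemma seg_betw: "betw L d a z b \<Longrightarrow> z \<in> seg L d a b"
  unfolding seg_def betw_def by auto

lemma forward:
  assumes r: "rBB X L d" and x0: "x0 \<in> X" and x1: "x1 \<in> X" and t: "t \<in> {0..1}"
  shows "(std_param L d x0 x1 t, (1 - t) * y0 + t * y1) \<in> seg (vert_lines X L d) (vert_dist d) (x0, y0) (x1, y1)"
proof -
  have tt: "0 \<le> t" "t \<le> 1" using t by auto
  consider "t = 0" | "t = 1" | "0 < t \<and> t < 1" using tt by linarith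
  then show ?thesis
  proof cases
    case 1 then show ?thesis using sp_0[OF r x0 x1] by (simp add: seg_def)
  next
    case 2 then show ?thesis using sp_1[OF r x0 x1] by (simp add: seg_def)
  next
    case 3
    then have t0: "0 < t" and t1: "t < 1" by auto
    show ?thesis
    proof (cases "x0 = x1")
      case True
      note xx = True
      show ?thesis
      proof (cases "y0 = y1")
        case True
        have "(1 - t) * y0 + t * y1 = y0" using True by (simp add: algebra_simps)
        then show ?thesis using xx True by (simp add: sp_same seg_def)
      next
        case False
        define yq where "yq = (1 - t) * y0 + t * y1"
        have Sv: "{x0} \<times> UNIV \<in> vert_lines X L d"
          unfolding vert_lines_def mem_Collect_eq
          apply (rule exI[of _ x0], rule exI[of _ y0], rule exI[of _ x0], rule exI[of _ y1])
          using x0 False by simp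
        have e1: "y0 - yq = t * (y0 - y1)" unfolding yq_def by (simp add: algebra_simps)
        have e2: "yq - y1 = (1 - t) * (y0 - y1)" unfolding yq_def by (simp add: algebra_simps)
        have n1: "yq \<noteq> y0" using e1 t0 False by auto
        have n2: "yq \<noteq> y1" using e2 t1 False by auto
        have "\<bar>y0 - y1\<bar> = \<bar>y0 - yq\<bar> + \<bar>yq - y1\<bar>" unfolding e1 e2 abs_mult using t0 t1
          by (simp add: algebra_simps)
        then have dd: "vert_dist d (x0, y0) (x0, y1) = vert_dist d (x0, y0) (x0, yq) + vert_dist d (x0, yq) (x0, y1)"
          unfolding vd_vert[OF r x0] .
        have "betw (vert_lines X L d) (vert_dist d) (x0, y0) (x0, yq) (x0, y1)"
          unfolding betw_def
        proof (intro conjI)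
          show "\<exists>l\<in>vert_lines X L d. (x0, y0) \<in> l \<and> (x0, yq) \<in> l \<and> (x0, y1) \<in> l"
            by (rule bexI[OF _ Sv]) simp
        qed (use n1 n2 False dd in simp_all)
        then show ?thesis using xx unfolding yq_def by (intro seg_betw) (simp add: sp_same)
      qed
    next
      case False
      obtain l c \<alpha> \<beta> where l: "l \<in> L" "x0 \<in> l" "x1 \<in> l" and c: "ruler d l c"
        and ab: "c \<alpha> = x0" "c \<beta> = x1" and sp: "\<And>t. std_param L d x0 x1 t = c ((\<beta> - \<alpha>) * t + \<alpha>)"
        using sp_facts[OF r x0 x1 False] by blast
      have abne: "\<alpha> \<noteq> \<beta>" using ab False by auto
      define a where "a = 1 / sqrt ((\<alpha> - \<beta>)\<^sup>2 + (y0 - y1)\<^sup>2)"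
      have apos: "a > 0" unfolding a_def by (rule norm_AB(1)) (use abne in simp)
      define P where "P = (\<lambda>\<tau>. (c (a * \<tau> * (\<beta> - \<alpha>) + \<alpha>), a * \<tau> * (y1 - y0) + y0))"
      define S where "S = P ` UNIV"
      have SL: "S \<in> vert_lines X L d"
        unfolding vert_lines_def mem_Collect_eq
        apply (rule exI[of _ x0], rule exI[of _ y0], rule exI[of _ x1], rule exI[of _ y1])
        apply (intro conjI x0 x1)
        using False apply simp
        apply (rule disjI1)
        apply (intro conjI False)
        apply (rule exI[of _ l], rule exI[of _ c], rule exI[of _ \<alpha>], rule exI[of _ \<beta>])
        using l c ab unfolding Let_def S_def P_def a_def by simp
      define u where "u = (\<beta> - \<alpha>) * t + \<alpha>"
      define yq where "yq = (1 - t) * y0 + t * y1"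
      have P0: "P 0 = (x0, y0)" unfolding P_def using ab by simp
      have P1: "P (1 / a) = (x1, y1)" unfolding P_def using ab apos by simp
      have Pq: "P (t / a) = (c u, yq)" unfolding P_def u_def yq_def using apos by (simp add: algebra_simps)
      have mem: "(x0, y0) \<in> S" "(c u, yq) \<in> S" "(x1, y1) \<in> S" unfolding S_def using P0 P1 Pq by (metis rangeI)+
      have n1: "c u \<noteq> x0"
      proof
        assume "c u = x0" then have "c u = c \<alpha>" using ab by simp
        then have "u = \<alpha>" by (rule ruler_inj[OF c])
        then show False using abne t0 unfolding u_def by simp
      qed
      have n2: "c u \<noteq> x1"
      proof
        assume "c u = x1" then have "c u = c \<beta>" using ab by simp
        then have "u = \<beta>" by (rule ruler_inj[OF c])
        then have "(\<beta> - \<alpha>) * (1 - t) = 0" unfolding u_def by (simp add: algebra_simps)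
        then show False using abne t1 by simp
      qed
      have e1: "\<alpha> - u = t * (\<alpha> - \<beta>)" unfolding u_def by (simp add: algebra_simps)
      have e2: "y0 - yq = t * (y0 - y1)" unfolding yq_def by (simp add: algebra_simps)
      have e3: "u - \<beta> = (1 - t) * (\<alpha> - \<beta>)" unfolding u_def by (simp add: algebra_simps)
      have e4: "yq - y1 = (1 - t) * (y0 - y1)" unfolding yq_def by (simp add: algebra_simps)
      have t1': "1 - t \<ge> 0" using t1 by simp
      have dd: "vert_dist d (x0, y0) (x1, y1) = vert_dist d (x0, y0) (c u, yq) + vert_dist d (c u, yq) (x1, y1)"
        unfolding ab[symmetric] vd_ruler[OF c] e1 e2 e3 e4 sqrt_scale[OF tt(1)] sqrt_scale[OF t1']
        by (simp add: algebra_simps)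
      have "betw (vert_lines X L d) (vert_dist d) (x0, y0) (c u, yq) (x1, y1)"
        unfolding betw_def
      proof (intro conjI)
        show "\<exists>l\<in>vert_lines X L d. (x0, y0) \<in> l \<and> (c u, yq) \<in> l \<and> (x1, y1) \<in> l"
          by (rule bexI[OF _ SL]) (intro conjI mem)
      qed (use n1 n2 False dd in simp_all)
      then show ?thesis unfolding sp u_def[symmetric] yq_def[symmetric] by (rule seg_betw)
    qed
  qed
qed


theorem theorem1:
  fixes X :: "'a set" and L :: "'a set set" and d :: "'a \<Rightarrow> 'a \<Rightarrow> real"
    and D :: "'a set" and f g :: "'a \<Rightarrow> real"
  assumes "rBB X L d"
    and "drop_complete (X \<times> (UNIV :: real set)) (vert_lines X L d) (vert_dist d)"
    and "D \<subseteq> X" and "D \<noteq> {}" and "bb_convex L d D"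
    and "\<forall>n::nat. n \<ge> 1 \<longrightarrow> (\<forall>xs :: nat \<Rightarrow> 'a. (\<forall>i\<le>n. xs i \<in> D) \<longrightarrow>
           (\<forall>x \<in> bb_conv X L d (xs ` {1..n}). \<forall>t\<in>{0..1::real}.
              f (std_param L d (xs 0) x t) \<le> (1 - t) * g (xs 0) + t * f x))"
  shows "\<exists>\<phi>. seg_convex_fun L d D \<phi> \<and> (\<forall>x\<in>D. f x \<le> \<phi> x \<and> \<phi> x \<le> g x)"
proof -
  note r = assms(1)
  define Xs where "Xs = X \<times> (UNIV :: real set)"
  define Ls where "Ls = vert_lines X L d"
  define ds where "ds = vert_dist d"
  have dc: "drop_complete Xs Ls ds" using assms(2) unfolding Xs_def Ls_def ds_def .
  have XsC: "bb_convex Ls ds Xs" unfolding Xs_def Ls_def ds_def by (rule Xs_convex[OF r])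
  have DX: "\<And>x. x \<in> D \<Longrightarrow> x \<in> X" using assms(3) by (rule subsetD)
  have hyp: "f (std_param L d x0 x t) \<le> (1 - t) * g x0 + t * f x"
    if h: "x0 \<in> D" "x \<in> D" "t \<in> {0..1}" for x0 x t
  proof -
    define xs where "xs = (\<lambda>i::nat. if i = 0 then x0 else x)"
    have xsD: "\<forall>i\<le>1. xs i \<in> D" using h unfolding xs_def by auto
    have img: "xs ` {1..1} = {x}" unfolding xs_def by simp
    have xin: "x \<in> bb_conv X L d (xs ` {1..1})" unfolding img by (rule subsetD[OF conv_sub]) simp
    have one: "(1::nat) \<ge> 1" by simp
    note H1 = mp[OF spec[OF assms(6), of 1] one]
    note H2 = mp[OF spec[OF H1, of xs] xsD]
    have "f (std_param L d (xs 0) x t) \<le> (1 - t) * g (xs 0) + t * f x"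
      using bspec[OF bspec[OF H2 xin] h(3)] .
    then show ?thesis unfolding xs_def by simp
  qed
  have fg: "f x \<le> g x" if "x \<in> D" for x
    using hyp[OF that that, of 0] by (simp add: sp_same)
  define E where "E = {p. fst p \<in> D \<and> g (fst p) \<le> snd p}"
  define Pr where "Pr = (\<lambda>q::'a \<times> real. fst q \<in> D \<and> f (fst q) \<le> snd q)"
  have EXs: "E \<subseteq> Xs" unfolding E_def Xs_def using DX by auto
  have step: "Pr q" if h: "p0 \<in> E" "Pr p" "q \<in> seg Ls ds p0 p" for p0 p q
  proof -
    obtain x0 y0 where p0: "p0 = (x0, y0)" by (cases p0)
    obtain x y where p: "p = (x, y)" by (cases p)
    have x0D: "x0 \<in> D" and gy0: "g x0 \<le> y0" using h(1) unfolding E_def p0 by auto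
    have xD: "x \<in> D" and fy: "f x \<le> y" using h(2) unfolding Pr_def p by auto
    obtain t where t: "t \<in> {0..1}" and qq: "q = (std_param L d x0 x t, (1 - t) * y0 + t * y)"
      using backward[OF r DX[OF x0D] DX[OF xD], of q y0 y] h(3) unfolding p0 p Ls_def ds_def by blast
    have tt: "0 \<le> t" "0 \<le> 1 - t" using t by auto
    have "std_param L d x0 x t \<in> seg L d x0 x" by (rule sp_seg[OF r DX[OF x0D] DX[OF xD] t])
    then have inD: "std_param L d x0 x t \<in> D" using assms(5) x0D xD unfolding bb_convex_def by blast
    have "f (std_param L d x0 x t) \<le> (1 - t) * g x0 + t * f x" by (rule hyp[OF x0D xD t])
    also have "\<dots> \<le> (1 - t) * y0 + t * y"
      using mult_left_mono[OF gy0 tt(2)] mult_left_mono[OF fy tt(1)] by linarith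
    finally show ?thesis unfolding Pr_def qq using inD by simp
  qed
  have fin: "finite F \<Longrightarrow> F \<subseteq> E \<Longrightarrow> \<forall>q \<in> bb_conv Xs Ls ds F. Pr q" for F
  proof (induction F rule: finite_induct)
    case empty then show ?case by (simp add: conv_empty)
  next
    case (insert p0 F)
    have p0E: "p0 \<in> E" using insert.prems by blast
    have p0Xs: "p0 \<in> Xs" using p0E EXs by blast
    have IH: "\<forall>q \<in> bb_conv Xs Ls ds F. Pr q" using insert.IH insert.prems by blast
    show ?case
    proof (cases "F = {}")
      case True
      have "Pr p0" using p0E fg unfolding E_def Pr_def by (auto intro: order_trans)
      then show ?thesis using conv_single[OF p0Xs, of Ls ds] True by auto
    next
      case False
      define K where "K = bb_conv Xs Ls ds F"
      have FK: "F \<subseteq> K" unfolding K_def by (rule conv_sub)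
      have KXs: "K \<subseteq> Xs" unfolding K_def using insert.prems EXs by (intro conv_least[OF _ XsC]) auto
      have Kne: "K \<noteq> {}" using FK False by blast
      have Kc: "bb_convex Ls ds K" unfolding K_def by (rule conv_convex)
      have "bb_conv Xs Ls ds (insert p0 K) = (\<Union>x\<in>K. seg Ls ds p0 x)"
        using dc[unfolded drop_complete_def, rule_format, OF conjI[OF KXs conjI[OF Kne conjI[OF Kc p0Xs]]]] .
      moreover have "bb_conv Xs Ls ds (insert p0 F) \<subseteq> bb_conv Xs Ls ds (insert p0 K)"
        using FK by (intro conv_mono) blast
      ultimately have sub: "bb_conv Xs Ls ds (insert p0 F) \<subseteq> (\<Union>x\<in>K. seg Ls ds p0 x)" by simp
      show ?thesis
      proof
        fix q assume "q \<in> bb_conv Xs Ls ds (insert p0 F)"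
        then obtain p where p: "p \<in> K" "q \<in> seg Ls ds p0 p" using sub by blast
        have "Pr p" using IH p(1) unfolding K_def by blast
        then show "Pr q" using step[OF p0E _ p(2)] by blast
      qed
    qed
  qed
  define U where "U = {q. \<exists>F. finite F \<and> F \<subseteq> E \<and> q \<in> bb_conv Xs Ls ds F}"
  have UXs: "U \<subseteq> Xs"
  proof
    fix q assume "q \<in> U"
    then obtain F where F: "finite F" "F \<subseteq> E" "q \<in> bb_conv Xs Ls ds F" unfolding U_def by blast
    have "bb_conv Xs Ls ds F \<subseteq> Xs" using F(2) EXs by (intro conv_least[OF _ XsC]) auto
    then show "q \<in> Xs" using F(3) by blast
  qed
  have EU: "E \<subseteq> U"
  proof
    fix p assume "p \<in> E"
    moreover have "p \<in> bb_conv Xs Ls ds {p}" by (rule subsetD[OF conv_sub]) simp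
    ultimately show "p \<in> U" unfolding U_def by (intro CollectI exI[of _ "{p}"]) auto
  qed
  have Uc: "bb_convex Ls ds U" unfolding bb_convex_def
  proof (intro ballI subsetI)
    fix a b z assume a: "a \<in> U" and b: "b \<in> U" and z: "z \<in> seg Ls ds a b"
    obtain F1 where F1: "finite F1" "F1 \<subseteq> E" "a \<in> bb_conv Xs Ls ds F1" using a unfolding U_def by blast
    obtain F2 where F2: "finite F2" "F2 \<subseteq> E" "b \<in> bb_conv Xs Ls ds F2" using b unfolding U_def by blast
    have "a \<in> bb_conv Xs Ls ds (F1 \<union> F2)" using subsetD[OF conv_mono[OF Un_upper1] F1(3)] .
    moreover have "b \<in> bb_conv Xs Ls ds (F1 \<union> F2)" using subsetD[OF conv_mono[OF Un_upper2] F2(3)] .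
    ultimately have "z \<in> bb_conv Xs Ls ds (F1 \<union> F2)"
      using conv_convex[of Ls ds Xs "F1 \<union> F2", unfolded bb_convex_def] z by blast
    then show "z \<in> U" unfolding U_def using F1 F2 by (intro CollectI exI[of _ "F1 \<union> F2"]) auto
  qed
  define C where "C = bb_conv Xs Ls ds E"
  have CU: "C \<subseteq> U" unfolding C_def by (rule conv_least[OF UXs Uc EU])
  have key: "Pr q" if "q \<in> C" for q
  proof -
    have "q \<in> U" using CU that by (rule subsetD)
    then obtain F where F: "finite F" "F \<subseteq> E" "q \<in> bb_conv Xs Ls ds F" unfolding U_def by blast
    show ?thesis using bspec[OF fin[OF F(1) F(2)] F(3)] .
  qed
  have Cc: "bb_convex Ls ds C" unfolding C_def by (rule conv_convex)
  define \<phi> where "\<phi> = (\<lambda>x. Inf {y. (x, y) \<in> C})"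
  have bdd: "bdd_below {y. (x, y) \<in> C}" for x
    by (rule bdd_belowI[of _ "f x"]) (use key in \<open>auto simp: Pr_def\<close>)
  have low: "\<phi> x \<le> y" if "(x, y) \<in> C" for x y
    unfolding \<phi>_def by (rule cInf_lower) (use that bdd in auto)
  have gC: "(x, g x) \<in> C" if "x \<in> D" for x
    using that conv_sub[of E Xs Ls ds] unfolding C_def E_def by auto
  have bounds: "f x \<le> \<phi> x \<and> \<phi> x \<le> g x" if xD: "x \<in> D" for x
  proof
    show "\<phi> x \<le> g x" by (rule low[OF gC[OF xD]])
    show "f x \<le> \<phi> x" unfolding \<phi>_def
      by (rule cInf_greatest) (use gC[OF xD] key in \<open>auto simp: Pr_def\<close>)
  qed
  have conv: "seg_convex_fun L d D \<phi>" unfolding seg_convex_fun_def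
  proof (intro ballI)
    fix x0 x1 t assume x0: "x0 \<in> D" and x1: "x1 \<in> D" and t: "t \<in> {0..1::real}"
    have tt: "0 \<le> t" "0 \<le> 1 - t" using t by auto
    let ?z = "std_param L d x0 x1 t"
    have A: "\<phi> ?z \<le> (1 - t) * y0 + t * y1" if "(x0, y0) \<in> C" "(x1, y1) \<in> C" for y0 y1
    proof -
      have "(?z, (1 - t) * y0 + t * y1) \<in> seg Ls ds (x0, y0) (x1, y1)"
        unfolding Ls_def ds_def by (rule forward[OF r DX[OF x0] DX[OF x1] t])
      then have "(?z, (1 - t) * y0 + t * y1) \<in> C" using Cc that unfolding bb_convex_def by blast
      then show ?thesis by (rule low)
    qed
    show "\<phi> ?z \<le> (1 - t) * \<phi> x0 + t * \<phi> x1"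
    proof (rule field_le_epsilon)
      fix e :: real assume e: "0 < e"
      have ne0: "{y. (x0, y) \<in> C} \<noteq> {}" using gC[OF x0] by blast
      have ne1: "{y. (x1, y) \<in> C} \<noteq> {}" using gC[OF x1] by blast
      obtain y0 where y0: "(x0, y0) \<in> C" "y0 < \<phi> x0 + e"
        using cInf_lessD[OF ne0, of "\<phi> x0 + e"] e unfolding \<phi>_def by auto
      obtain y1 where y1: "(x1, y1) \<in> C" "y1 < \<phi> x1 + e"
        using cInf_lessD[OF ne1, of "\<phi> x1 + e"] e unfolding \<phi>_def by auto
      have "\<phi> ?z \<le> (1 - t) * y0 + t * y1" by (rule A[OF y0(1) y1(1)])
      also have "\<dots> \<le> (1 - t) * (\<phi> x0 + e) + t * (\<phi> x1 + e)"
        using mult_left_mono[OF less_imp_le[OF y0(2)] tt(2)] mult_left_mono[OF less_imp_le[OF y1(2)] tt(1)] by linarith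
      also have "\<dots> = (1 - t) * \<phi> x0 + t * \<phi> x1 + e" by (simp add: algebra_simps)
      finally show "\<phi> ?z \<le> (1 - t) * \<phi> x0 + t * \<phi> x1 + e" .
    qed
  qed
  show ?thesis using conv bounds by blast
qed

end
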